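(* For $R>0$ let $D_R=\{(a,b,c,d)\in\mathbb{R}^4:\ ad-bc>0,\ (a+d)^2+(b-c)^2\le R^2\}$, and for $(a,b,c,d)\in D_R$ let $k(a,b,c,d)$ denote the deformation coefficient of the operator with matrix $\begin{pmatrix}a&b\\c&d\end{pmatrix}$. Then for every $R>0$ $$\overline{k}_2:=\frac{1}{\operatorname{vol}(D_R)}\int_{D_R}k(a,b,c,d)\,da\,db\,dc\,dd=3-4\ln 2\approx 0.2274.$$
   Context: A non-degenerate linear operator $\varphi$ on $\mathbb{R}^2$ maps the unit circle onto an ellipse; let $p\ge q>0$ be the lengths of its semi-axes. The deformation coefficient is $k(\varphi)=q/p$. The volume and integral are with respect to Lebesgue measure on $\mathbb{R}^4$. *)

theory Defs
  imports "HOL-Analysis.Analysis"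
begin

text \<open>The image of the unit circle is an ellipse centred at 0; its semi-axes are
  the maximal and minimal distance from the centre to the ellipse.\<close>

definition major_semiaxis :: "real^2^2 \<Rightarrow> real" where
  "major_semiaxis A = (SUP x\<in>sphere (0::real^2) 1. norm (A *v x))"

definition minor_semiaxis :: "real^2^2 \<Rightarrow> real" where
  "minor_semiaxis A = (INF x\<in>sphere (0::real^2) 1. norm (A *v x))"

definition deformation_coeff :: "real^2^2 \<Rightarrow> real" where
  "deformation_coeff A = minor_semiaxis A / major_semiaxis A"

text \<open>Matrix (a b; c d) has a = A$1$1, b = A$1$2, c = A$2$1, d = A$2$2.\<close>

definition D_set :: "real \<Rightarrow> (real^2^2) set" where
  "D_set R = {A. A$1$1 * A$2$2 - A$1$2 * A$2$1 > 0 \<and>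
                 (A$1$1 + A$2$2)^2 + (A$1$2 - A$2$1)^2 \<le> R^2}"

end

theory Submission
  imports Defs
begin


definition zc :: "real^2^2 \<Rightarrow> complex" where
  "zc A = Complex ((A$1$1 + A$2$2)/2) ((A$2$1 - A$1$2)/2)"
definition wc :: "real^2^2 \<Rightarrow> complex" where
  "wc A = Complex ((A$1$1 - A$2$2)/2) ((A$1$2 + A$2$1)/2)"

lemma norm_vec2: "norm (x::real^2) = sqrt ((x$1)^2 + (x$2)^2)"
  by (simp add: norm_vec_def L2_set_def sum_2)

lemma norm_mult_cmod:
  "norm (A *v x) = cmod (zc A * Complex (x$1) (x$2) + wc A * cnj (Complex (x$1) (x$2)))"
  unfolding norm_vec2 cmod_def zc_def wc_def
  apply (rule arg_cong[where f=sqrt])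
  apply (simp add: matrix_vector_mult_def sum_2 power2_eq_square field_simps)
  done

lemma cnj_unit: "cmod X = 1 \<Longrightarrow> cnj X = inverse X"
proof -
  assume "cmod X = 1"
  then have "X * cnj X = 1" using complex_norm_square[of X] by simp
  then show ?thesis using inverse_unique[of X "cnj X"] by simp
qed

lemma sphere_cmod: "x \<in> sphere (0::real^2) 1 \<Longrightarrow> cmod (Complex (x$1) (x$2)) = 1"
  by (simp add: norm_vec2 cmod_def)

lemma sphere_ex: "cmod X = 1 \<Longrightarrow> \<exists>x\<in>sphere (0::real^2) 1. Complex (x$1) (x$2) = X"
  apply (rule bexI[where x="vector [Re X, Im X]"])
   apply (simp add: complex_eq_iff)
  apply (simp add: norm_vec2 cmod_def)
  done

lemma upper: "cmod X = 1 \<Longrightarrow> cmod (z*X + w*cnj X) \<le> cmod z + cmod w"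
  using norm_triangle_ineq[of "z*X" "w*cnj X"] by (simp add: norm_mult)

lemma lower: "cmod X = 1 \<Longrightarrow> cmod z - cmod w \<le> cmod (z*X + w*cnj X)"
  using norm_diff_ineq[of "z*X" "w*cnj X"] by (simp add: norm_mult)

lemma attain:
  assumes "cmod w < cmod z" and "e = 1 \<or> e = -1"
  shows "\<exists>X. cmod X = 1 \<and> cmod (z*X + w*cnj X) = cmod z + e * cmod w"
proof (cases "w = 0")
  case True
  then show ?thesis by (intro exI[where x=1]) auto
next
  case False
  have z0: "z \<noteq> 0" using assms by auto
  define v where "v = of_real e * w * cnj z / (of_real (cmod w * cmod z))"
  have "cmod v = 1" using False z0 assms(2) unfolding v_def
    by (auto simp: norm_mult norm_divide)
  define X where "X = csqrt v"
  have X2: "X * X = v" unfolding X_def by (metis power2_csqrt power2_eq_square)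
  have X1: "cmod X = 1" unfolding X_def using \<open>cmod v = 1\<close> by simp
  have Xnz: "X \<noteq> 0" using X1 by auto
  have "w * cnj X = of_real (e * cmod w / cmod z) * (z * X)"
  proof -
    have "w * cnj X = w / X" using cnj_unit[OF X1] by (simp add: divide_inverse)
    also have "\<dots> = w * X / (X * X)" using Xnz by (simp add: field_simps)
    also have "\<dots> = of_real (e * cmod w / cmod z) * (z * X)"
    proof -
      have cz: "cnj z = of_real (cmod z)^2 / z" using z0 complex_norm_square[of z] by (simp add: field_simps)
      show ?thesis
      unfolding X2 v_def cz using False z0 assms(2)
      apply (simp add: field_simps)
      apply (elim disjE)
       apply (simp_all add: power2_eq_square algebra_simps)
      done
    qed
    finally show ?thesis .
  qed
  then have "z*X + w*cnj X = of_real (1 + e * cmod w / cmod z) * (z * X)"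
    by (simp add: algebra_simps)
  then have "cmod (z*X + w*cnj X) = \<bar>1 + e * cmod w / cmod z\<bar> * cmod z"
    using X1 by (simp only: norm_mult norm_of_real mult_1_right)
  also have "\<dots> = cmod z + e * cmod w"
  proof -
    have "e * cmod w \<ge> - cmod z" using assms(2) proof
      assume "e = 1" then show ?thesis using norm_ge_zero[of w] norm_ge_zero[of z] by (simp del: norm_ge_zero)
    next
      assume "e = -1" then show ?thesis using assms(1) by simp
    qed
    then have "e * cmod w / cmod z \<ge> -1" using z0 by (simp add: field_simps)
    then show ?thesis using z0 by (simp add: field_simps)
  qed
  finally show ?thesis using X1 by blast
qed

lemma major_eq:
  assumes "cmod (wc A) < cmod (zc A)"
  shows "major_semiaxis A = cmod (zc A) + cmod (wc A)"
  unfolding major_semiaxis_def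
proof (rule cSup_eq_maximum)
  obtain X where X: "cmod X = 1" "cmod (zc A*X + wc A*cnj X) = cmod (zc A) + 1 * cmod (wc A)"
    using attain[OF assms, of 1] by auto
  then obtain x :: "real^2" where "x \<in> sphere 0 1" "Complex (x$1) (x$2) = X" using sphere_ex by blast
  then show "cmod (zc A) + cmod (wc A) \<in> (\<lambda>x. norm (A *v x)) ` sphere 0 1"
    using X by (auto simp: norm_mult_cmod intro!: image_eqI[where x=x])
next
  fix y assume "y \<in> (\<lambda>x. norm (A *v x)) ` sphere 0 1"
  then show "y \<le> cmod (zc A) + cmod (wc A)"
    by (auto simp: norm_mult_cmod intro!: upper sphere_cmod)
qed

lemma minor_eq:
  assumes "cmod (wc A) < cmod (zc A)"
  shows "minor_semiaxis A = cmod (zc A) - cmod (wc A)"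
  unfolding minor_semiaxis_def
proof (rule cInf_eq_minimum)
  obtain X where X: "cmod X = 1" "cmod (zc A*X + wc A*cnj X) = cmod (zc A) + (-1) * cmod (wc A)"
    using attain[OF assms, of "-1"] by auto
  then obtain x :: "real^2" where "x \<in> sphere 0 1" "Complex (x$1) (x$2) = X" using sphere_ex by blast
  then show "cmod (zc A) - cmod (wc A) \<in> (\<lambda>x. norm (A *v x)) ` sphere 0 1"
    using X by (auto simp: norm_mult_cmod intro!: image_eqI[where x=x])
next
  fix y assume "y \<in> (\<lambda>x. norm (A *v x)) ` sphere 0 1"
  then show "cmod (zc A) - cmod (wc A) \<le> y"
    by (auto simp: norm_mult_cmod intro!: lower sphere_cmod)
qed

lemma s1: "(b::real)^2 < a^2 \<longleftrightarrow> b < a" if "0 \<le> a" "0 \<le> b" for a b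
  proof
    assume "b^2 < a^2" then show "b < a" using power_less_imp_less_base[of b 2 a] that by simp
  next
    assume "b < a" then show "b^2 < a^2" using power_strict_mono[of b a 2] that by simp
  qed
lemma s2: "4*(a::real)^2 \<le> R^2 \<longleftrightarrow> 2*a \<le> R" if "0 \<le> a" "R > 0" for a R
  proof -
    have "(2*a)^2 \<le> R^2 \<longleftrightarrow> \<bar>2*a\<bar> \<le> \<bar>R\<bar>" by (rule abs_le_square_iff[symmetric])
    then show ?thesis using that by (simp add: power_mult_distrib)
  qed
lemma h1: "(0 < (cmod z)\<^sup>2 - (cmod w)\<^sup>2) = (cmod w < cmod z)"
      using s1[of "cmod z" "cmod w"] by simp
lemma det_eq: "A$1$1 * A$2$2 - A$1$2 * A$2$1 = (cmod (zc A))^2 - (cmod (wc A))^2"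
  by (simp add: cmod_power2 zc_def wc_def) (simp add: power2_eq_square field_simps)

lemma e_eq: "(A$1$1 + A$2$2)^2 + (A$1$2 - A$2$1)^2 = 4 * (cmod (zc A))^2" for A :: "real^2^2"
proof -
  have g: "4*((x/2)^2 + (y/2)^2) = x^2 + y^2" for x y :: real by (simp add: power_divide)
  have "(A$1$2 - A$2$1)^2 = (A$2$1 - A$1$2)^2" by (rule power2_commute)
  moreover have "(cmod (zc A))^2 = ((A$1$1 + A$2$2)/2)^2 + ((A$2$1 - A$1$2)/2)^2"
    unfolding cmod_power2 zc_def by simp
  ultimately show ?thesis using g[of "A$1$1 + A$2$2" "A$2$1 - A$1$2"]
    by simp
qed

lemma D_set_eq: "D_set R = {A. cmod (wc A) < cmod (zc A) \<and> 2 * cmod (zc A) \<le> R}" if "R > 0"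
proof -
  show ?thesis unfolding D_set_def e_eq det_eq
  proof (rule Collect_cong)
    fix A :: "real^2^2"
    have h1: "(0 < (cmod (zc A))\<^sup>2 - (cmod (wc A))\<^sup>2) = (cmod (wc A) < cmod (zc A))"
      using s1[of "cmod (zc A)" "cmod (wc A)"] by simp
    have h2: "(4 * (cmod (zc A))\<^sup>2 \<le> R\<^sup>2) = (2 * cmod (zc A) \<le> R)"
      using s2[of "cmod (zc A)" R] that by simp
    show "(0 < (cmod (zc A))\<^sup>2 - (cmod (wc A))\<^sup>2 \<and> 4 * (cmod (zc A))\<^sup>2 \<le> R\<^sup>2) =
      (cmod (wc A) < cmod (zc A) \<and> 2 * cmod (zc A) \<le> R)"
      by (simp only: h1 h2)
  qed
qed



lemma lborel_basis_iso:
  fixes \<psi> :: "'a::euclidean_space \<Rightarrow> 'b::euclidean_space"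
  assumes lin: "linear \<psi>" and inj: "inj_on \<psi> Basis" and im: "\<psi> ` Basis = Basis"
  shows "distr lborel borel \<psi> = lborel"
proof -
  have inner: "\<psi> x \<bullet> \<psi> b = x \<bullet> b" if b: "b \<in> Basis" for x b
  proof -
    have "\<psi> x = (\<Sum>c\<in>Basis. (x \<bullet> c) *\<^sub>R \<psi> c)"
      by (metis (no_types, lifting) euclidean_representation lin linear_scale linear_sum sum.cong)
    then have "\<psi> x \<bullet> \<psi> b = (\<Sum>c\<in>Basis. (x \<bullet> c) * (\<psi> c \<bullet> \<psi> b))"
      by (simp add: inner_sum_left)
    also have "\<dots> = (\<Sum>c\<in>Basis. (x \<bullet> c) * (if c = b then 1 else 0))"
    proof (rule sum.cong)
      fix c :: 'a assume c: "c \<in> Basis"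
      have "\<psi> c \<in> Basis" "\<psi> b \<in> Basis" using c b im by auto
      moreover have "\<psi> c = \<psi> b \<longleftrightarrow> c = b" using inj c b by (auto dest: inj_onD)
      ultimately show "(x \<bullet> c) * (\<psi> c \<bullet> \<psi> b) = (x \<bullet> c) * (if c = b then 1 else 0)"
        by (simp add: inner_Basis)
    qed simp
    also have "\<dots> = x \<bullet> b" using b by (simp add: if_distrib sum.delta cong: if_cong)
    finally show ?thesis .
  qed
  have meas: "\<psi> \<in> borel_measurable borel"
    using lin by (intro borel_measurable_continuous_onI linear_continuous_on linear_conv_bounded_linear[THEN iffD1])
  define T where "T l = (\<Sum>b\<in>Basis. (l \<bullet> \<psi> b) *\<^sub>R b)" for l :: 'b
  have Tin: "T l \<bullet> b = l \<bullet> \<psi> b" if "b \<in> Basis" for l b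
    using that unfolding T_def by (simp add: inner_sum_left inner_Basis if_distrib sum.delta cong: if_cong)
  have pre: "\<psi> -` box l u = box (T l) (T u)" for l u
  proof -
    have "x \<in> \<psi> -` box l u \<longleftrightarrow> (\<forall>b'\<in>\<psi> ` Basis. l \<bullet> b' < \<psi> x \<bullet> b' \<and> \<psi> x \<bullet> b' < u \<bullet> b')" for x
      unfolding im by (simp add: mem_box)
    also have "\<dots>x \<longleftrightarrow> x \<in> box (T l) (T u)" for x
      by (simp add: mem_box Tin inner)
    finally show ?thesis by auto
  qed
  show ?thesis
  proof (rule lborel_eqI[symmetric])
    fix l u :: 'b assume le: "\<And>b. b \<in> Basis \<Longrightarrow> l \<bullet> b \<le> u \<bullet> b"
    have "emeasure (distr lborel borel \<psi>) (box l u) = emeasure lborel (box (T l) (T u))"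
      using meas by (simp add: emeasure_distr pre)
    also have "\<dots> = (\<Prod>b\<in>Basis. (T u - T l) \<bullet> b)"
      using le im by (intro emeasure_lborel_box) (auto simp: Tin)
    also have "\<dots> = (\<Prod>b\<in>Basis. (u - l) \<bullet> \<psi> b)"
      by (intro arg_cong[where f=ennreal] prod.cong) (auto simp: inner_diff_left Tin)
    also have "\<dots> = (\<Prod>b\<in>\<psi> ` Basis. (u - l) \<bullet> b)"
      using inj by (simp add: prod.reindex)
    finally show "emeasure (distr lborel borel \<psi>) (box l u) = (\<Prod>b\<in>Basis. (u - l) \<bullet> b)"
      unfolding im .
  qed simp
qed



definition psi :: "real^2^2 \<Rightarrow> real^4" where
  "psi A = (\<chi> k. if k = 1 then A$2$2 else if k = 2 then A$1$2 else if k = 3 then A$2$1 else A$1$1)"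

lemma psi_nth [simp]: "psi A $ 1 = A$2$2" "psi A $ 2 = A$1$2" "psi A $ 3 = A$2$1" "psi A $ 4 = A$1$1"
  by (simp_all add: psi_def)

lemma linear_psi: "linear psi"
  by (rule linearI) (simp_all add: vec_eq_iff forall_4)

lemma inj_psi: "inj psi"
proof (rule injI)
  fix A B assume "psi A = psi B"
  then have "A$1$1 = B$1$1" "A$1$2 = B$1$2" "A$2$1 = B$2$1" "A$2$2 = B$2$2"
    by (metis psi_nth)+
  then show "A = B" by (simp add: vec_eq_iff forall_2)
qed

lemma Basis22: "(Basis :: (real^2^2) set) = {axis 1 (axis 1 1), axis 1 (axis 2 1), axis 2 (axis 1 1), axis 2 (axis 2 1)}"
  by (auto simp: Basis_vec_def UNIV_2)

lemma Basis4: "(Basis :: (real^4) set) = {axis 1 1, axis 2 1, axis 3 1, axis 4 1}"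
  by (auto simp: Basis_vec_def UNIV_4)

lemma psi_Basis: "psi ` Basis = Basis"
proof -
  have "psi (axis 1 (axis 1 1)) = axis 4 1" "psi (axis 1 (axis 2 1)) = axis 2 1"
       "psi (axis 2 (axis 1 1)) = axis 3 1" "psi (axis 2 (axis 2 1)) = axis 1 1"
    by (simp_all add: vec_eq_iff forall_4 axis_def)
  then show ?thesis unfolding Basis22 Basis4 by auto
qed

lemma distr_psi: "distr lborel borel psi = lborel"
  using lborel_basis_iso[OF linear_psi inj_on_subset[OF inj_psi] psi_Basis] by simp

lemma psi_meas: "psi \<in> borel_measurable borel"
  using linear_psi by (intro borel_measurable_continuous_onI linear_continuous_on linear_conv_bounded_linear[THEN iffD1])

lemma emeasure_psi_vimage:
  assumes "S \<in> sets borel"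
  shows "emeasure lborel (psi -` S) = emeasure lborel S"
proof -
  have "emeasure lborel S = emeasure (distr lborel borel psi) S" by (simp add: distr_psi)
  also have "\<dots> = emeasure lborel (psi -` S)" using assms psi_meas by (simp add: emeasure_distr)
  finally show ?thesis ..
qed

definition z4 :: "real^4 \<Rightarrow> complex" where "z4 x = Complex ((x$4 + x$1)/2) ((x$3 - x$2)/2)"
definition w4 :: "real^4 \<Rightarrow> complex" where "w4 x = Complex ((x$4 - x$1)/2) ((x$2 + x$3)/2)"

lemma zc_psi: "zc A = z4 (psi A)" and wc_psi: "wc A = w4 (psi A)"
  by (simp_all add: zc_def z4_def wc_def w4_def)

definition Mm :: "real \<Rightarrow> real^4^4" where
  "Mm c = (\<chi> i j. if i = j then (1+c)/2 else if (i = 4 \<and> j = 1) \<or> (i = 1 \<and> j = 4) then (1-c)/2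
     else if (i = 2 \<and> j = 3) \<or> (i = 3 \<and> j = 2) then -(1-c)/2 else 0)"

lemma Mm_apply: "Mm c *v x = (\<chi> i. if i = 1 then (1-c)/2 * x$4 + (1+c)/2 * x$1
   else if i = 2 then (1+c)/2 * x$2 - (1-c)/2 * x$3
   else if i = 3 then -(1-c)/2 * x$2 + (1+c)/2 * x$3
   else (1+c)/2 * x$4 + (1-c)/2 * x$1)"
  by (simp add: vec_eq_iff forall_4 Mm_def matrix_vector_mult_def sum_4; simp add: algebra_simps)

lemma z4_Mm: "z4 (Mm c *v x) = z4 x"
  by (simp add: Mm_apply z4_def field_simps)

lemma w4_Mm: "w4 (Mm c *v x) = of_real c * w4 x"
  by (simp add: Mm_apply w4_def complex_eq_iff field_simps)

lemma prod_4: "prod f (UNIV::4 set) = f 1 * f 2 * f 3 * f 4"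
  unfolding UNIV_4 by (simp add: ac_simps)

lemma det_Mm: assumes "c > 0" shows "det (Mm c) = c^2"
proof -
  define a where "a = (1+c)/2"
  define b where "b = (1-c)/2"
  have a0: "a \<noteq> 0" using assms by (simp add: a_def)
  have ab: "a*a - b*b = c" by (simp add: a_def b_def field_simps)
  have cb: "c + b*2 = 1" by (simp add: b_def field_simps)
  have acb: "a * c + a * (b * 2) = a" 
  proof -
    have "a * c + a * (b * 2) = a * (c + b*2)" by (simp only: distrib_left)
    then show ?thesis using cb by simp
  qed
  define Lm :: "real^4^4" where "Lm = (\<chi> i j. if i = j then 1 else if i = 1 \<and> j = 4 then b/a
     else if i = 3 \<and> j = 2 then -b/a else 0)"
  define Dm :: "real^4^4" where "Dm = (\<chi> i j. if i = j then (if i = 1 \<or> i = 3 then c/a else a) else 0)"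
  define Um :: "real^4^4" where "Um = (\<chi> i j. if i = j then 1 else if i = 4 \<and> j = 1 then b/a
     else if i = 2 \<and> j = 3 then -b/a else 0)"
  have lt: "(4::4) < 1" "(1::4) < 2" "(2::4) < 3" "(4::4) < 2" "(4::4) < 3" "(1::4) < 3"
    by (simp_all add: less_bit0_def bit0.Rep_numeral bit0.Rep_1)
  have "Mm c = Lm ** Dm ** Um"
    unfolding Mm_def Lm_def Dm_def Um_def a_def[symmetric] b_def[symmetric]
    using a0 ab cb
    apply (simp add: vec_eq_iff forall_4 matrix_matrix_mult_def sum_4 field_simps)
    by (rule acb)
  moreover have "det Lm = 1"
  proof -
    have "det Lm = prod (\<lambda>i. Lm$i$i) UNIV"
    proof (rule det_lowerdiagonal)
      fix i j :: 4 assume ij: "i < j"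
      then have "i \<noteq> j" by simp
      moreover have "\<not> (i = 1 \<and> j = 4)" using ij lt(1) less_asym by blast
      moreover have "\<not> (i = 3 \<and> j = 2)" using ij lt(3) less_asym by blast
      ultimately show "Lm$i$j = 0" unfolding Lm_def by auto
    qed
    then show ?thesis by (simp add: Lm_def)
  qed
  moreover have "det Um = 1"
  proof -
    have "det Um = prod (\<lambda>i. Um$i$i) UNIV"
    proof (rule det_upperdiagonal)
      fix i j :: 4 assume ij: "i > j"
      then have "i \<noteq> j" by simp
      moreover have "\<not> (i = 4 \<and> j = 1)" using ij lt(1) less_asym by blast
      moreover have "\<not> (i = 2 \<and> j = 3)" using ij lt(3) less_asym by blast
      ultimately show "Um$i$j = 0" unfolding Um_def by auto
    qed
    then show ?thesis by (simp add: Um_def)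
  qed
  moreover have "det Dm = c^2"
  proof -
    have "det Dm = prod (\<lambda>i. Dm$i$i) UNIV"
      by (rule det_diagonal) (simp add: Dm_def)
    also have "\<dots> = c^2" using a0 unfolding prod_4 by (simp add: Dm_def power2_eq_square)
    finally show ?thesis .
  qed
  ultimately show ?thesis by (simp add: det_mul)
qed



lemma z4_cont: "continuous_on UNIV z4"
  unfolding z4_def Complex_eq by (intro continuous_intros) auto
lemma w4_cont: "continuous_on UNIV w4"
  unfolding w4_def Complex_eq by (intro continuous_intros) auto

lemma z4_meas[measurable]: "z4 \<in> borel_measurable borel"
  using z4_cont by (rule borel_measurable_continuous_onI)
lemma w4_meas[measurable]: "w4 \<in> borel_measurable borel"
  using w4_cont by (rule borel_measurable_continuous_onI)

definition E4 :: "real \<Rightarrow> real \<Rightarrow> (real^4) set" where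
  "E4 R c = {x. cmod (w4 x) < c * cmod (z4 x) \<and> 2 * cmod (z4 x) \<le> R}"

lemma E4_borel: "E4 R c \<in> sets borel"
  unfolding E4_def by measurable

lemma zw_eq: "z4 x = z4 y \<Longrightarrow> w4 x = w4 y \<Longrightarrow> x = y"
  unfolding z4_def w4_def
  by (simp add: vec_eq_iff forall_4)

lemma E4_bounded: "bounded (E4 R c)"
proof -
  have "norm x \<le> 4 * (\<bar>R\<bar> + \<bar>c\<bar> * \<bar>R\<bar>)" if "x \<in> E4 R c" for x
  proof -
    from that have h: "cmod (w4 x) < c * cmod (z4 x)" "2 * cmod (z4 x) \<le> R" by (simp_all add: E4_def)
    have n0: "0 \<le> cmod (z4 x)" by simp
    have z: "cmod (z4 x) \<le> \<bar>R\<bar>" using h(2) n0 by linarith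
    have "c * cmod (z4 x) \<le> \<bar>c\<bar> * cmod (z4 x)" using n0 by (simp add: mult_right_mono)
    also have "\<dots> \<le> \<bar>c\<bar> * \<bar>R\<bar>" using z by (simp add: mult_left_mono)
    finally have w: "cmod (w4 x) \<le> \<bar>c\<bar> * \<bar>R\<bar>" using h(1) by linarith
    have x1: "x$1 = Re (z4 x) - Re (w4 x)" and x2: "x$2 = Im (w4 x) - Im (z4 x)"
      and x3: "x$3 = Im (z4 x) + Im (w4 x)" and x4: "x$4 = Re (z4 x) + Re (w4 x)"
      by (simp_all add: z4_def w4_def field_simps)
    note ineqs = abs_Re_le_cmod[of "z4 x"] abs_Re_le_cmod[of "w4 x"] abs_Im_le_cmod[of "z4 x"] abs_Im_le_cmod[of "w4 x"]
    have b1: "\<bar>x$1\<bar> \<le> cmod (z4 x) + cmod (w4 x)"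
      unfolding x1 using ineqs abs_triangle_ineq4[of "Re (z4 x)" "Re (w4 x)"] by linarith
    have b2: "\<bar>x$2\<bar> \<le> cmod (z4 x) + cmod (w4 x)"
      unfolding x2 using ineqs abs_triangle_ineq4[of "Im (w4 x)" "Im (z4 x)"] by linarith
    have b3: "\<bar>x$3\<bar> \<le> cmod (z4 x) + cmod (w4 x)"
      unfolding x3 using ineqs abs_triangle_ineq[of "Im (z4 x)" "Im (w4 x)"] by linarith
    have b4: "\<bar>x$4\<bar> \<le> cmod (z4 x) + cmod (w4 x)"
      unfolding x4 using ineqs abs_triangle_ineq[of "Re (z4 x)" "Re (w4 x)"] by linarith
    have b: "\<bar>x$i\<bar> \<le> cmod (z4 x) + cmod (w4 x)" for i
      using exhaust_4[of i] b1 b2 b3 b4 by blast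
    have "norm x \<le> sum (\<lambda>i. \<bar>x$i\<bar>) UNIV" by (rule norm_le_l1_cart)
    also have "\<dots> \<le> sum (\<lambda>i. cmod (z4 x) + cmod (w4 x)) (UNIV :: 4 set)"
      by (rule sum_mono) (rule b)
    also have "\<dots> = 4 * (cmod (z4 x) + cmod (w4 x))" by simp
    also have "\<dots> \<le> 4 * (\<bar>R\<bar> + \<bar>c\<bar> * \<bar>R\<bar>)" using z w by simp
    finally show ?thesis .
  qed
  then show ?thesis unfolding bounded_iff by blast
qed

lemma E4_lmeasurable: "E4 R c \<in> lmeasurable"
  by (intro bounded_set_imp_lmeasurable E4_bounded) (simp add: E4_borel)

lemma E4_image: assumes "c > 0" shows "E4 R c = (\<lambda>x. Mm c *v x) ` E4 R 1"
proof
  show "(\<lambda>x. Mm c *v x) ` E4 R 1 \<subseteq> E4 R c"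
    using assms by (auto simp: E4_def z4_Mm w4_Mm norm_mult)
  show "E4 R c \<subseteq> (\<lambda>x. Mm c *v x) ` E4 R 1"
  proof
    fix y assume y: "y \<in> E4 R c"
    define x where "x = Mm (1/c) *v y"
    have "Mm c *v x = y"
      using assms by (intro zw_eq) (simp_all add: x_def z4_Mm w4_Mm)
    moreover have "x \<in> E4 R 1"
      using y assms by (auto simp: E4_def x_def z4_Mm w4_Mm norm_mult norm_divide field_simps)
    ultimately show "y \<in> (\<lambda>x. Mm c *v x) ` E4 R 1" by blast
  qed
qed

lemma measure_E4: assumes "c > 0" shows "measure lebesgue (E4 R c) = c^2 * measure lebesgue (E4 R 1)"
proof -
  have "measure lebesgue (E4 R c) = measure lebesgue ((\<lambda>x. Mm c *v x) ` E4 R 1)"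
    using E4_image[OF assms] by simp
  also have "\<dots> = \<bar>det (matrix (\<lambda>x. Mm c *v x))\<bar> * measure lebesgue (E4 R 1)"
    by (rule measure_linear_image) (simp_all add: E4_lmeasurable)
  also have "\<dots> = c^2 * measure lebesgue (E4 R 1)"
    using assms by (simp add: det_Mm)
  finally show ?thesis .
qed

definition E :: "real \<Rightarrow> real \<Rightarrow> (real^2^2) set" where
  "E R c = {A. cmod (wc A) < c * cmod (zc A) \<and> 2 * cmod (zc A) \<le> R}"

lemma E_psi: "E R c = psi -` E4 R c"
  by (auto simp: E_def E4_def zc_psi wc_psi)

lemma emeasure_E: "emeasure lborel (E R c) = emeasure lborel (E4 R c)"
  unfolding E_psi by (rule emeasure_psi_vimage) (rule E4_borel)

lemma E_finite: "emeasure lborel (E R c) < \<infinity>"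
  unfolding emeasure_E using E4_bounded by (rule emeasure_bounded_finite)

lemma measure_E: "measure lborel (E R c) = measure lebesgue (E4 R c)"
  using emeasure_E E4_borel unfolding measure_def by simp

lemma measure_E_scale: "c > 0 \<Longrightarrow> measure lborel (E R c) = c^2 * measure lborel (E R 1)"
  unfolding measure_E by (rule measure_E4)

lemma E_borel: "E R c \<in> sets borel"
  unfolding E_psi using E4_borel psi_meas by (simp add: measurable_sets_borel)



lemma layer_cake:
  fixes f :: "'a::euclidean_space \<Rightarrow> real"
  assumes [measurable]: "S \<in> sets borel" "f \<in> borel_measurable borel"
  and b: "\<And>x. x \<in> S \<Longrightarrow> 0 \<le> f x \<and> f x \<le> 1"
  shows "(\<integral>\<^sup>+x. indicator S x * ennreal (f x) \<partial>lborel) =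
         (\<integral>\<^sup>+t. indicator {0..1} t * emeasure lborel {x\<in>S. t < f x} \<partial>lborel)"
proof -
  define G where "G x t = (if x \<in> S \<and> 0 \<le> t \<and> t \<le> 1 \<and> t < f x then 1 else 0 :: ennreal)" for x and t :: real
  have Gm: "case_prod G \<in> borel_measurable (lborel \<Otimes>\<^sub>M lborel)"
    unfolding G_def by measurable
  have inner1: "indicator S x * ennreal (f x) = (\<integral>\<^sup>+t. G x t \<partial>lborel)" for x
  proof (cases "x \<in> S")
    case True
    then have "G x t = indicator {0..<f x} t" for t
      using b[OF True] by (auto simp: G_def indicator_def)
    then have "(\<integral>\<^sup>+t. G x t \<partial>lborel) = emeasure lborel {0..<f x}"
      by simp
    also have "\<dots> = ennreal (f x)" using b[OF True] by simp
    finally show ?thesis using True by simp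
  next
    case False
    then show ?thesis by (simp add: G_def)
  qed
  have inner2: "(\<integral>\<^sup>+x. G x t \<partial>lborel) = indicator {0..1} t * emeasure lborel {x\<in>S. t < f x}" for t
  proof -
    have "G x t = indicator {0..1} t * indicator {x\<in>S. t < f x} x" for x
      by (auto simp: G_def indicator_def)
    then have "(\<integral>\<^sup>+x. G x t \<partial>lborel) = (\<integral>\<^sup>+x. indicator {0..1} t * indicator {x\<in>S. t < f x} x \<partial>lborel)"
      by simp
    also have "\<dots> = indicator {0..1} t * emeasure lborel {x\<in>S. t < f x}"
      by (rule nn_integral_cmult_indicator) measurable
    finally show ?thesis .
  qed
  have "(\<integral>\<^sup>+x. indicator S x * ennreal (f x) \<partial>lborel) = (\<integral>\<^sup>+x. (\<integral>\<^sup>+t. G x t \<partial>lborel) \<partial>lborel)"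
    by (simp add: inner1)
  also have "\<dots> = (\<integral>\<^sup>+t. (\<integral>\<^sup>+x. G x t \<partial>lborel) \<partial>lborel)"
    using lborel_pair.Fubini'[OF Gm] by simp
  also have "\<dots> = (\<integral>\<^sup>+t. indicator {0..1} t * emeasure lborel {x\<in>S. t < f x} \<partial>lborel)"
    by (simp add: inner2)
  finally show ?thesis .
qed

lemma ftc_part:
  "(\<integral>\<^sup>+t. ennreal (((1-t)/(1+t))^2) * indicator {0..1} t \<partial>lborel) = ennreal (3 - 4 * ln 2)"
  and ftc_nonneg: "0 \<le> 3 - 4 * ln (2::real)"
proof -
  define F where "F t = (1+t) - 4/(1+t) - 4 * ln (1+t)" for t :: real
  have d: "DERIV F t :> ((1-t)/(1+t))^2" if "t \<in> {0..1}" for t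
  proof -
    have t: "1 + t > 0" using that by auto
    have "DERIV F t :> 1 - (- 4 / (1+t)^2) - 4 * (1 / (1+t))"
      unfolding F_def using t
      by (auto intro!: derivative_eq_intros simp: power2_eq_square field_simps)
    moreover have "1 - (- 4 / (1+t)^2) - 4 * (1 / (1+t)) = ((1-t)/(1+t))^2"
    proof -
      define u where "u = 1 + t"
      have u: "u \<noteq> 0" using t by (simp add: u_def)
      have "1 - (- 4 / u^2) - 4 * (1 / u) = ((2-u)/u)^2"
        using u by (simp add: field_simps power2_eq_square)
      then have "1 - (- 4 / (1+t)^2) - 4 * (1 / (1+t)) = ((2-(1+t))/(1+t))^2"
        by (simp only: u_def)
      moreover have "2 - (1+t) = 1 - t" by simp
      ultimately show ?thesis by (simp only:)
    qed
    ultimately show ?thesis by simp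
  qed
  have m: "(\<lambda>t::real. ((1-t)/(1+t))^2) \<in> borel_measurable borel" by measurable
  have F: "F 1 - F 0 = 3 - 4 * ln 2" by (simp add: F_def)
  show "(\<integral>\<^sup>+t. ennreal (((1-t)/(1+t))^2) * indicator {0..1} t \<partial>lborel) = ennreal (3 - 4 * ln 2)"
    using nn_integral_FTC_Icc[OF m d, of 0 1] F by simp
  have "(\<integral>t. ((1-t)/(1+t))^2 * indicator {0..1} (t::real) \<partial>lborel) = F 1 - F 0"
    using integral_FTC_Icc_nonneg[OF m d, of 0 1] by simp
  moreover have "0 \<le> (\<integral>t. ((1-t)/(1+t))^2 * indicator {0..1} (t::real) \<partial>lborel)"
    by (simp add: indicator_def)
  ultimately show "0 \<le> 3 - 4 * ln (2::real)" using F by simp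
qed



lemma zc_comp: "zc = z4 \<circ> psi" and wc_comp: "wc = w4 \<circ> psi"
  by (auto simp: zc_psi wc_psi)

lemma zc_meas[measurable]: "zc \<in> borel_measurable borel"
  unfolding zc_comp by (rule measurable_comp[OF psi_meas z4_meas])
lemma wc_meas[measurable]: "wc \<in> borel_measurable borel"
  unfolding wc_comp by (rule measurable_comp[OF psi_meas w4_meas])

lemma psi_cont: "continuous_on UNIV psi"
  using linear_psi by (intro linear_continuous_on linear_conv_bounded_linear[THEN iffD1])
lemma zc_cont: "continuous_on UNIV zc"
  unfolding zc_comp by (rule continuous_on_compose[OF psi_cont]) (rule continuous_on_subset[OF z4_cont], simp)
lemma wc_cont: "continuous_on UNIV wc"
  unfolding wc_comp by (rule continuous_on_compose[OF psi_cont]) (rule continuous_on_subset[OF w4_cont], simp)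

definition kf :: "real^2^2 \<Rightarrow> real" where
  "kf A = (cmod (zc A) - cmod (wc A)) / (cmod (zc A) + cmod (wc A))"

lemma kf_meas[measurable]: "kf \<in> borel_measurable borel"
  unfolding kf_def by measurable

lemma D_E: "R > 0 \<Longrightarrow> D_set R = E R 1"
  by (simp add: D_set_eq E_def)

lemma kf_bounds: assumes "A \<in> E R 1" shows "0 \<le> kf A \<and> kf A \<le> 1"
proof -
  have "cmod (wc A) < cmod (zc A)" using assms by (simp add: E_def)
  moreover have "0 \<le> cmod (wc A)" by simp
  ultimately have pos: "0 < cmod (zc A) + cmod (wc A)" and le: "cmod (zc A) - cmod (wc A) \<le> cmod (zc A) + cmod (wc A)"
    and nn: "0 \<le> cmod (zc A) - cmod (wc A)" by linarith+
  show ?thesis unfolding kf_def using pos le nn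
    by (simp add: divide_le_eq_1_pos divide_nonneg_pos)
qed

lemma defcoeff_eq: assumes "A \<in> E R 1" shows "deformation_coeff A = kf A"
proof -
  have "cmod (wc A) < cmod (zc A)" using assms by (simp add: E_def)
  then show ?thesis unfolding deformation_coeff_def kf_def by (simp add: major_eq minor_eq)
qed

lemma level_set:
  assumes t: "0 \<le> t" "t \<le> 1"
  shows "{A \<in> E R 1. t < kf A} = E R ((1-t)/(1+t))"
proof (intro set_eqI iffI)
  fix A assume A: "A \<in> {A \<in> E R 1. t < kf A}"
  then have lt: "cmod (wc A) < cmod (zc A)" and r: "2 * cmod (zc A) \<le> R" and k: "t < kf A"
    by (auto simp: E_def)
  have pos: "0 < cmod (zc A) + cmod (wc A)" using lt by (smt (verit) norm_ge_zero)
  from k pos have "t * (cmod (zc A) + cmod (wc A)) < cmod (zc A) - cmod (wc A)"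
    unfolding kf_def by (simp add: field_simps)
  then have "(1 + t) * cmod (wc A) < (1 - t) * cmod (zc A)" by (simp add: algebra_simps)
  then have "cmod (wc A) < (1-t)/(1+t) * cmod (zc A)" using t by (simp add: field_simps)
  then show "A \<in> E R ((1-t)/(1+t))" using r by (simp add: E_def)
next
  fix A assume A: "A \<in> E R ((1-t)/(1+t))"
  then have w: "cmod (wc A) < (1-t)/(1+t) * cmod (zc A)" and r: "2 * cmod (zc A) \<le> R"
    by (auto simp: E_def)
  have "(1-t)/(1+t) \<le> 1" using t by (simp add: field_simps)
  moreover have z0: "0 \<le> cmod (zc A)" by simp
  moreover have "0 \<le> (1-t)/(1+t)" using t by simp
  ultimately have "(1-t)/(1+t) * cmod (zc A) \<le> cmod (zc A)"
    using mult_left_le_one_le[of "cmod (zc A)" "(1-t)/(1+t)"] by blast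
  with w have lt: "cmod (wc A) < cmod (zc A)" by linarith
  have pos: "0 < cmod (zc A) + cmod (wc A)" using lt by (smt (verit) norm_ge_zero)
  from w have "(1 + t) * cmod (wc A) < (1 - t) * cmod (zc A)" using t by (simp add: field_simps)
  then have "t * (cmod (zc A) + cmod (wc A)) < cmod (zc A) - cmod (wc A)" by (simp add: algebra_simps)
  then have "t < kf A" unfolding kf_def using pos by (simp add: field_simps)
  then show "A \<in> {A \<in> E R 1. t < kf A}" using lt r by (simp add: E_def)
qed

lemma level_measure:
  assumes t: "0 \<le> t" "t \<le> 1"
  shows "emeasure lborel {A \<in> E R 1. t < kf A} = ennreal (((1-t)/(1+t))^2 * measure lborel (E R 1))"
proof (cases "t = 1")
  case True
  have "E R 0 = {}" by (auto simp: E_def)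
  then show ?thesis unfolding level_set[OF t] using True by simp
next
  case False
  then have c: "(1-t)/(1+t) > 0" using t by simp
  have "emeasure lborel (E R ((1-t)/(1+t))) = ennreal (measure lborel (E R ((1-t)/(1+t))))"
    using E_finite[of R "(1-t)/(1+t)"] by (intro emeasure_eq_ennreal_measure) (simp add: less_top)
  also have "\<dots> = ennreal (((1-t)/(1+t))^2 * measure lborel (E R 1))"
    using measure_E_scale[OF c] by simp
  finally show ?thesis unfolding level_set[OF t] .
qed

lemma E1_pos: assumes "R > 0" shows "0 < measure lborel (E R 1)"
proof -
  define U where "U = {A. cmod (wc A) < cmod (zc A)} \<inter> {A. 2 * cmod (zc A) < R}"
  have "open U" unfolding U_def
    by (intro open_Int open_Collect_less continuous_on_norm zc_cont wc_cont continuous_on_const continuous_on_mult)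
  define A0 :: "real^2^2" where "A0 = mat (R/4)"
  have zA: "zc A0 = complex_of_real (R/4)" and wA: "wc A0 = 0"
    by (simp_all add: A0_def zc_def wc_def mat_def complex_eq_iff)
  have c: "cmod (zc A0) = R/4" using assms unfolding zA by simp
  have "0 < cmod (zc A0)" "2 * cmod (zc A0) < R" using c assms by linarith+
  then have "A0 \<in> U" using wA by (simp add: U_def)
  then obtain e where e: "e > 0" "ball A0 e \<subseteq> U"
    using \<open>open U\<close> open_contains_ball_eq by blast
  have "U \<subseteq> E R 1" by (auto simp: U_def E_def)
  have "0 < measure lborel (ball A0 e)" using e(1) by (rule content_ball_pos)
  also have "\<dots> \<le> measure lborel (E R 1)"
  proof (rule measure_mono_fmeasurable)
    show "ball A0 e \<subseteq> E R 1" using e(2) \<open>U \<subseteq> E R 1\<close> by blast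
    show "ball A0 e \<in> sets lborel" by simp
    show "E R 1 \<in> fmeasurable lborel" using E_finite E_borel by (intro fmeasurableI) simp_all
  qed
  finally show ?thesis .
qed

theorem theorem3p1:
  fixes R :: real
  assumes "R > 0"
  shows "integral (D_set R) deformation_coeff / measure lebesgue (D_set R) = 3 - 4 * ln 2"
proof -
  define D where "D = E R 1"
  define m where "m = measure lborel D"
  have DD: "D_set R = D" unfolding D_def using assms by (rule D_E)
  have Db[measurable]: "D \<in> sets borel" unfolding D_def by (rule E_borel)
  have m0: "0 < m" unfolding m_def D_def using assms by (rule E1_pos)
  have kb: "\<And>x. x \<in> D \<Longrightarrow> 0 \<le> kf x \<and> kf x \<le> 1" unfolding D_def by (rule kf_bounds)
  have "(\<integral>\<^sup>+A. ennreal (indicator D A * kf A) \<partial>lborel) = (\<integral>\<^sup>+A. indicator D A * ennreal (kf A) \<partial>lborel)"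
    by (intro nn_integral_cong) (simp add: indicator_def)
  also have "\<dots> = (\<integral>\<^sup>+t. indicator {0..1} t * emeasure lborel {x\<in>D. t < kf x} \<partial>lborel)"
    by (rule layer_cake[OF Db kf_meas kb])
  also have "\<dots> = (\<integral>\<^sup>+t. ennreal m * (ennreal (((1-t)/(1+t))^2) * indicator {0..1} t) \<partial>lborel)"
  proof (intro nn_integral_cong)
    fix t :: real
    show "indicator {0..1} t * emeasure lborel {x\<in>D. t < kf x} = ennreal m * (ennreal (((1-t)/(1+t))^2) * indicator {0..1} t)"
    proof (cases "t \<in> {0..1}")
      case True
      then have "emeasure lborel {x\<in>D. t < kf x} = ennreal (((1-t)/(1+t))^2 * m)"
        unfolding D_def m_def by (intro level_measure) auto
      then show ?thesis using True m0 by (simp add: ennreal_mult' mult.commute)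
    qed simp
  qed
  also have "\<dots> = ennreal m * (\<integral>\<^sup>+t. ennreal (((1-t)/(1+t))^2) * indicator {0..1} t \<partial>lborel)"
    by (rule nn_integral_cmult) measurable
  also have "\<dots> = ennreal (m * (3 - 4 * ln 2))"
    using ftc_part m0 by (simp add: ennreal_mult')
  finally have nn: "(\<integral>\<^sup>+A. ennreal (indicator D A * kf A) \<partial>lborel) = ennreal (m * (3 - 4 * ln 2))" .
  have "((\<lambda>A. indicator D A * kf A) has_integral (m * (3 - 4 * ln 2))) UNIV"
  proof (rule nn_integral_has_integral)
    show "(\<lambda>A. indicator D A * kf A) \<in> borel_measurable borel" by measurable
    show "0 \<le> indicator D x * kf x" for x using kb[of x] by (simp add: indicator_def)
    show "0 \<le> m * (3 - 4 * ln 2)" using m0 ftc_nonneg by simp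
  qed (rule nn)
  moreover have "(\<lambda>A. indicator D A * kf A) = (\<lambda>A. if A \<in> D then kf A else 0)"
    by (auto simp: indicator_def)
  ultimately have "(kf has_integral (m * (3 - 4 * ln 2))) D"
    by (simp add: has_integral_restrict_UNIV)
  then have "integral D kf = m * (3 - 4 * ln 2)" by (rule integral_unique)
  moreover have "integral D deformation_coeff = integral D kf"
    by (rule integral_cong) (simp add: D_def defcoeff_eq)
  moreover have "measure lebesgue D = m" unfolding m_def using Db by simp
  ultimately show ?thesis unfolding DD using m0 by simp
qed


end
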